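(* For $k,\ell\in\mathbb Z_{\ge0}$, $$p_c^{(k-2\ell;k)}(t)=\sum_{m=0}^k\frac1{2^m}k^{\underline m}K_m(\ell;k)t^m,\qquad p_c^{(2k-\ell;\ell)}(t)=\sum_{m=0}^{\ell}\frac{(-1)^m}{2^m}\ell^{\underline m}K_m(k;\ell)t^m.$$
   Context: $r^{\underline m}=r(r-1)\cdots(r-m+1)$, $r^{\overline m}=r(r+1)\cdots(r+m-1)$. Binomial coefficients: $\binom am=a(a-1)\cdots(a-m+1)/m!$ for $m\in\mathbb Z_{\ge1}$, $\binom a0=1$, and $\binom am=0$ for negative integers $m$. Binary Krawtchouk polynomials: $K_m(x;y)=\sum_{j=0}^m(-1)^j\binom xj\binom{y-x}{m-j}$. Cayley continuants $\mathrm{Cay}_m(x;y)=\sum_{j=0}^m\binom mj(\frac{x+y}2)^{\underline j}(\frac{x-y}2)^{\overline{m-j}}$. $p_c^{(s;k)}(t)=\sum_{m=0}^k\frac1{2^m}\binom km\mathrm{Cay}_m(s;k)t^m$ for $s\in\mathbb C$, $k\in\mathbb Z_{\ge0}$. *)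

theory Defs
  imports "HOL-Analysis.Analysis"
begin

definition ffact :: "complex \<Rightarrow> nat \<Rightarrow> complex" where
  "ffact r m = (\<Prod>i<m. r - of_nat i)"

definition rfact :: "complex \<Rightarrow> nat \<Rightarrow> complex" where
  "rfact r m = (\<Prod>i<m. r + of_nat i)"

definition kraw :: "nat \<Rightarrow> complex \<Rightarrow> complex \<Rightarrow> complex" where
  "kraw m x y = (\<Sum>j=0..m. (-1)^j * (x gchoose j) * ((y - x) gchoose (m - j)))"

definition cay :: "nat \<Rightarrow> complex \<Rightarrow> complex \<Rightarrow> complex" where
  "cay m x y = (\<Sum>j=0..m. of_nat (m choose j) * ffact ((x + y) / 2) j * rfact ((x - y) / 2) (m - j))"

definition pc :: "complex \<Rightarrow> nat \<Rightarrow> complex \<Rightarrow> complex" where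
  "pc s k t = (\<Sum>m=0..k. (1 / 2^m) * of_nat (k choose m) * cay m s (of_nat k) * t^m)"

end

theory Submission
  imports Defs
begin

lemma ffact_gchoose: "ffact r n = fact n * (r gchoose n)"
  by (simp add: ffact_def gbinomial_prod_rev atLeast0LessThan)

lemma rfact_neg: "rfact (- b) n = (-1)^n * ffact b n"
proof -
  have "rfact (- b) n = (\<Prod>i<n. (-1) * (b - of_nat i))"
    unfolding rfact_def by (rule prod.cong) simp_all
  also have "\<dots> = (-1)^n * ffact b n"
    by (simp only: prod.distrib ffact_def prod_constant card_lessThan)
  finally show ?thesis .
qed

lemma key:
  fixes a b :: complex
  shows "(\<Sum>j=0..m. of_nat (m choose j) * ffact a j * rfact (- b) (m - j))
       = fact m * (\<Sum>j=0..m. (-1)^(m-j) * (a gchoose j) * (b gchoose (m - j)))"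
proof -
  have "(\<Sum>j=0..m. of_nat (m choose j) * ffact a j * rfact (- b) (m - j))
      = (\<Sum>j=0..m. fact m * ((-1)^(m-j) * (a gchoose j) * (b gchoose (m - j))))"
  proof (intro sum.cong refl)
    fix j assume j: "j \<in> {0..m}"
    have f: "fact j * fact (m - j) * of_nat (m choose j) = (fact m :: complex)"
      using binomial_fact_lemma[of j m] j by (metis atLeastAtMost_iff of_nat_fact of_nat_mult)
    show "of_nat (m choose j) * ffact a j * rfact (- b) (m - j)
        = fact m * ((-1)^(m-j) * (a gchoose j) * (b gchoose (m - j)))"
      by (simp add: rfact_neg ffact_gchoose f[symmetric] algebra_simps)
  qed
  then show ?thesis by (simp add: sum_distrib_left)
qed

lemma kraw_rev:
  "kraw m x y = (\<Sum>j=0..m. (-1)^(m-j) * (x gchoose (m-j)) * ((y - x) gchoose j))"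
  unfolding kraw_def
  by (subst sum.atLeastAtMost_rev) (intro sum.cong refl, auto)

lemma part1:
  fixes k l :: nat and m :: nat
  assumes "m \<le> k"
  shows "of_nat (k choose m) * cay m (of_nat k - 2 * of_nat l) (of_nat k)
       = ffact (of_nat k) m * kraw m (of_nat l) (of_nat k)"
proof -
  have c: "cay m (of_nat k - 2 * of_nat l) (of_nat k)
     = (\<Sum>j=0..m. of_nat (m choose j) * ffact (of_nat k - of_nat l) j * rfact (- of_nat l) (m - j))"
  proof -
    have "(of_nat k - 2 * of_nat l + of_nat k) / 2 = (of_nat k - of_nat l :: complex)"
         "(of_nat k - 2 * of_nat l - of_nat k) / 2 = (- of_nat l :: complex)" by (simp_all add: field_simps)
    then show ?thesis unfolding cay_def by (simp only:)
  qed
  have kr: "kraw m (of_nat l) (of_nat k) =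
     (\<Sum>j=0..m. (-1)^(m-j) * ((of_nat k - of_nat l) gchoose j) * (of_nat l gchoose (m - j)))"
    unfolding kraw_rev by (intro sum.cong refl) (simp add: mult.commute mult.left_commute)
  have ff: "ffact (of_nat k) m = of_nat (k choose m) * fact m"
    using binomial_fact_lemma[OF assms]
    by (simp add: ffact_gchoose binomial_gbinomial[symmetric])
  show ?thesis
    by (simp add: c key kr ff)
qed

lemma part2:
  fixes k l :: nat and m :: nat
  assumes "m \<le> l"
  shows "of_nat (l choose m) * cay m (2 * of_nat k - of_nat l) (of_nat l)
       = (-1)^m * ffact (of_nat l) m * kraw m (of_nat k) (of_nat l)"
proof -
  have c: "cay m (2 * of_nat k - of_nat l) (of_nat l)
     = (\<Sum>j=0..m. of_nat (m choose j) * ffact (of_nat k) j * rfact (- (of_nat l - of_nat k)) (m - j))"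
  proof -
    have "(2 * of_nat k - of_nat l + of_nat l) / 2 = (of_nat k :: complex)"
         "(2 * of_nat k - of_nat l - of_nat l) / 2 = (- (of_nat l - of_nat k) :: complex)" by (simp_all add: field_simps)
    then show ?thesis unfolding cay_def by (simp only:)
  qed
  have kr: "(-1)^m * kraw m (of_nat k) (of_nat l) =
     (\<Sum>j=0..m. (-1)^(m-j) * (of_nat k gchoose j) * ((of_nat l - of_nat k) gchoose (m - j)))"
    unfolding kraw_def sum_distrib_left
  proof (intro sum.cong refl)
    fix j assume j: "j \<in> {0..m}"
    have "(-1::complex)^m = (-1)^j * (-1)^(m-j)"
      using j by (simp add: power_add[symmetric])
    moreover have "(-1::complex)^j * (-1)^j = 1"
      by (simp flip: power_mult_distrib)
    ultimately have h: "(-1::complex)^m * (-1)^j = (-1)^(m-j)"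
      by (metis mult.commute mult.left_commute mult_1_right)
    show "(-1::complex)^m * ((-1)^j * (of_nat k gchoose j) * ((of_nat l - of_nat k) gchoose (m - j))) =
         (-1)^(m-j) * (of_nat k gchoose j) * ((of_nat l - of_nat k) gchoose (m - j))"
      by (simp only: h[symmetric] mult.assoc)
  qed
  have ff: "ffact (of_nat l) m = of_nat (l choose m) * fact m"
    using binomial_fact_lemma[OF assms]
    by (simp add: ffact_gchoose binomial_gbinomial[symmetric])
  show ?thesis
    unfolding c key kr[symmetric] ff by (simp add: algebra_simps)
qed

theorem corollary7p3:
  fixes k l :: nat and t :: complex
  shows "pc (of_nat k - 2 * of_nat l) k t
           = (\<Sum>m=0..k. (1 / 2^m) * ffact (of_nat k) m * kraw m (of_nat l) (of_nat k) * t^m)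
       \<and> pc (2 * of_nat k - of_nat l) l t
           = (\<Sum>m=0..l. ((-1)^m / 2^m) * ffact (of_nat l) m * kraw m (of_nat k) (of_nat l) * t^m)"
proof
  show "pc (of_nat k - 2 * of_nat l) k t
           = (\<Sum>m=0..k. (1 / 2^m) * ffact (of_nat k) m * kraw m (of_nat l) (of_nat k) * t^m)"
    unfolding pc_def
  proof (intro sum.cong refl)
    fix m assume "m \<in> {0..k}"
    then have "m \<le> k" by simp
    from part1[OF this, of l] show "1 / 2 ^ m * of_nat (k choose m) * cay m (of_nat k - 2 * of_nat l) (of_nat k) * t ^ m =
         1 / 2 ^ m * ffact (of_nat k) m * kraw m (of_nat l) (of_nat k) * t ^ m"
      by (metis mult.assoc)
  qed
  show "pc (2 * of_nat k - of_nat l) l t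
           = (\<Sum>m=0..l. ((-1)^m / 2^m) * ffact (of_nat l) m * kraw m (of_nat k) (of_nat l) * t^m)"
    unfolding pc_def
  proof (intro sum.cong refl)
    fix m assume "m \<in> {0..l}"
    then have "m \<le> l" by simp
    from part2[OF this, of k] show "1 / 2 ^ m * of_nat (l choose m) * cay m (2 * of_nat k - of_nat l) (of_nat l) * t ^ m =
         (-1)^m / 2 ^ m * ffact (of_nat l) m * kraw m (of_nat k) (of_nat l) * t ^ m"
      by (simp add: mult.assoc)
  qed
qed

end
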